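(* Let $G$ be a smallest counterexample to the statement "every $n$-vertex triangulation has an independent dominating set of size at most $n/3$" (i.e., $G$ is a triangulation on $n$ vertices with no independent dominating set of size at most $n/3$, and every triangulation with fewer vertices has an independent dominating set of size at most one third of its number of vertices). Let $\psi$ be a partial proper $4$-coloring of $G$ such that every uncolored vertex has degree exactly four, $|\psi[v]|\ge 3$ for every vertex $v$, and $|\psi[v]|=4$ for every vertex $v$ of degree at most five, and let $\overline{C}$ be the set of uncolored vertices. Then the bad subgraph $G_B$ of $G$ has a vertex cover of size at most $|\overline{C}|$.
   Context: Graphs are finite, undirected and simple. A triangulation is a planar graph embedded in the plane such that every face, including the outer face, is bounded by a cycle on three edges. A set $S\subseteq V(G)$ is an independent dominating set if no two vertices of $S$ are adjacent and every vertex not in $S$ has a neighbor in $S$. A partial proper $4$-coloring assigns to some vertices colors from $\{1,2,3,4\}$ with adjacent colored vertices receiving distinct colors. $\psi[v]$ is the set of colors used by $\psi$ on the closed neighborhood $N[v]$. For $i\in\{1,2,3,4\}$, $C_i$ is the set of vertices of color $i$, and $U_i$ is the set of vertices of $G$ not in $C_i$ and having no neighbor in $C_i$. A bad edge is an edge of $G$ between $U_i$ and $U_j$ for some $i\neq j$; letting $E_B$ be the set of bad edges and $V_B$ the set of their endpoints, the bad subgraph is $G_B=(V_B,E_B)$. A vertex cover of $G_B$ is a set of vertices meeting every edge of $G_B$. *)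

theory Defs
  imports Main
begin

definition simple_graph :: "'a set \<Rightarrow> ('a \<Rightarrow> 'a \<Rightarrow> bool) \<Rightarrow> bool" where
  "simple_graph V E \<longleftrightarrow> finite V \<and>
     (\<forall>u v. E u v \<longrightarrow> u \<in> V \<and> v \<in> V \<and> u \<noteq> v \<and> E v u)"

definition connected_graph :: "'a set \<Rightarrow> ('a \<Rightarrow> 'a \<Rightarrow> bool) \<Rightarrow> bool" where
  "connected_graph V E \<longleftrightarrow> (\<forall>u\<in>V. \<forall>v\<in>V. E\<^sup>*\<^sup>* u v)"

definition edges :: "('a \<Rightarrow> 'a \<Rightarrow> bool) \<Rightarrow> 'a set set" where
  "edges E = {{u, v} | u v. E u v}"

definition nbrs :: "('a \<Rightarrow> 'a \<Rightarrow> bool) \<Rightarrow> 'a \<Rightarrow> 'a set" where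
  "nbrs E v = {u. E v u}"

definition degree :: "('a \<Rightarrow> 'a \<Rightarrow> bool) \<Rightarrow> 'a \<Rightarrow> nat" where
  "degree E v = card (nbrs E v)"

definition darts :: "('a \<Rightarrow> 'a \<Rightarrow> bool) \<Rightarrow> ('a \<times> 'a) set" where
  "darts E = {(u, v). E u v}"

definition rotation_system :: "('a \<Rightarrow> 'a \<Rightarrow> bool) \<Rightarrow> ('a \<times> 'a \<Rightarrow> 'a \<times> 'a) \<Rightarrow> bool" where
  "rotation_system E \<sigma> \<longleftrightarrow> bij_betw \<sigma> (darts E) (darts E) \<and>
     (\<forall>d\<in>darts E. fst (\<sigma> d) = fst d) \<and>
     (\<forall>u v w. E u v \<longrightarrow> E u w \<longrightarrow> (\<exists>n. (\<sigma> ^^ n) (u, v) = (u, w)))"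

definition face_perm :: "('a \<times> 'a \<Rightarrow> 'a \<times> 'a) \<Rightarrow> 'a \<times> 'a \<Rightarrow> 'a \<times> 'a" where
  "face_perm \<sigma> d = \<sigma> (snd d, fst d)"

definition orbit :: "('b \<Rightarrow> 'b) \<Rightarrow> 'b \<Rightarrow> 'b set" where
  "orbit f x = {(f ^^ n) x | n. True}"

definition faces :: "('a \<Rightarrow> 'a \<Rightarrow> bool) \<Rightarrow> ('a \<times> 'a \<Rightarrow> 'a \<times> 'a) \<Rightarrow> ('a \<times> 'a) set set" where
  "faces E \<sigma> = orbit (face_perm \<sigma>) ` darts E"

(* A triangulation: a connected simple graph with a plane (genus 0, by Euler's formula)
   combinatorial embedding in which every face (including the outer one) is bounded by
   a closed walk of length 3, i.e. (the graph being simple) by a cycle on three edges. *)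
definition triangulation :: "'a set \<Rightarrow> ('a \<Rightarrow> 'a \<Rightarrow> bool) \<Rightarrow> bool" where
  "triangulation V E \<longleftrightarrow> simple_graph V E \<and> connected_graph V E \<and>
     (\<exists>\<sigma>. rotation_system E \<sigma> \<and>
          (\<forall>F\<in>faces E \<sigma>. card F = 3) \<and>
          int (card V) - int (card (edges E)) + int (card (faces E \<sigma>)) = 2)"

definition independent_dominating :: "'a set \<Rightarrow> ('a \<Rightarrow> 'a \<Rightarrow> bool) \<Rightarrow> 'a set \<Rightarrow> bool" where
  "independent_dominating V E S \<longleftrightarrow> S \<subseteq> V \<and>
     (\<forall>u\<in>S. \<forall>v\<in>S. \<not> E u v) \<and>
     (\<forall>v\<in>V - S. \<exists>u\<in>S. E v u)"

(* partial proper 4-colouring: None = uncoloured, colours are 1..4 *)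
definition partial_proper_4col :: "'a set \<Rightarrow> ('a \<Rightarrow> 'a \<Rightarrow> bool) \<Rightarrow> ('a \<Rightarrow> nat option) \<Rightarrow> bool" where
  "partial_proper_4col V E \<psi> \<longleftrightarrow>
     (\<forall>v\<in>V. \<forall>c. \<psi> v = Some c \<longrightarrow> c \<in> {1..4}) \<and>
     (\<forall>u v c. E u v \<longrightarrow> \<psi> u = Some c \<longrightarrow> \<psi> v \<noteq> Some c)"

(* psi[v]: colours used on the closed neighbourhood N[v] *)
definition cols_closed :: "('a \<Rightarrow> 'a \<Rightarrow> bool) \<Rightarrow> ('a \<Rightarrow> nat option) \<Rightarrow> 'a \<Rightarrow> nat set" where
  "cols_closed E \<psi> v = {c. \<exists>u\<in>insert v (nbrs E v). \<psi> u = Some c}"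

definition colour_class :: "'a set \<Rightarrow> ('a \<Rightarrow> nat option) \<Rightarrow> nat \<Rightarrow> 'a set" where
  "colour_class V \<psi> i = {v\<in>V. \<psi> v = Some i}"

definition U_set :: "'a set \<Rightarrow> ('a \<Rightarrow> 'a \<Rightarrow> bool) \<Rightarrow> ('a \<Rightarrow> nat option) \<Rightarrow> nat \<Rightarrow> 'a set" where
  "U_set V E \<psi> i = {v\<in>V. v \<notin> colour_class V \<psi> i \<and> (\<forall>u. E v u \<longrightarrow> u \<notin> colour_class V \<psi> i)}"

definition bad_edges :: "'a set \<Rightarrow> ('a \<Rightarrow> 'a \<Rightarrow> bool) \<Rightarrow> ('a \<Rightarrow> nat option) \<Rightarrow> 'a set set" where
  "bad_edges V E \<psi> = {{u, v} | u v i j. E u v \<and> i \<in> {1..4} \<and> j \<in> {1..4} \<and> i \<noteq> j \<and>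
                         u \<in> U_set V E \<psi> i \<and> v \<in> U_set V E \<psi> j}"

definition bad_vertices :: "'a set \<Rightarrow> ('a \<Rightarrow> 'a \<Rightarrow> bool) \<Rightarrow> ('a \<Rightarrow> nat option) \<Rightarrow> 'a set" where
  "bad_vertices V E \<psi> = \<Union> (bad_edges V E \<psi>)"

definition uncoloured :: "'a set \<Rightarrow> ('a \<Rightarrow> nat option) \<Rightarrow> 'a set" where
  "uncoloured V \<psi> = {v\<in>V. \<psi> v = None}"

end

theory Submission
  imports Defs
begin

lemma cnt: "finite B \<Longrightarrow> card {b\<in>B. P b} = (\<Sum>b\<in>B. if P b then 1 else 0)"
  by (simp add: sum.If_cases Int_def)
lemma dc:
  assumes "finite A" "finite B"
  shows "(\<Sum>a\<in>A. card {b\<in>B. P a b}) = (\<Sum>b\<in>B. card {a\<in>A. P a b})"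
proof -
  have "(\<Sum>a\<in>A. card {b\<in>B. P a b}) = (\<Sum>a\<in>A. \<Sum>b\<in>B. if P a b then 1 else 0)"
    using assms(2) by (intro sum.cong refl cnt)
  also have "\<dots> = (\<Sum>b\<in>B. \<Sum>a\<in>A. if P a b then 1 else 0)" by (rule sum.swap)
  also have "\<dots> = (\<Sum>b\<in>B. card {a\<in>A. P a b})"
    using assms(1) by (intro sum.cong refl cnt[symmetric])
  finally show ?thesis .
qed

lemma face_tri:
  assumes sg: "simple_graph V E" and rs: "rotation_system E \<sigma>"
    and fc: "\<forall>F\<in>faces E \<sigma>. card F = 3" and uv: "E u v"
  shows "\<exists>x. E v x \<and> E x u \<and> \<sigma> (v,u) = (v,x) \<and> \<sigma> (x,v) = (x,u) \<and> \<sigma> (u,x) = (u,v)"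
proof -
  have Es: "\<And>a b. E a b \<Longrightarrow> E b a \<and> a \<noteq> b" using sg unfolding simple_graph_def by blast
  have bij: "bij_betw \<sigma> (darts E) (darts E)" and fstp: "\<forall>d\<in>darts E. fst (\<sigma> d) = fst d"
    using rs unfolding rotation_system_def by blast+
  have step: "\<And>a b. E a b \<Longrightarrow> \<exists>c. \<sigma> (a,b) = (a,c) \<and> E a c"
  proof -
    fix a b assume "E a b"
    then have d: "(a,b) \<in> darts E" by (simp add: darts_def)
    then have "\<sigma> (a,b) \<in> darts E" using bij_betw_apply[OF bij] by blast
    moreover have "fst (\<sigma> (a,b)) = a" using fstp[rule_format, OF d] by simp
    moreover obtain p q where pq: "\<sigma> (a,b) = (p,q)" by (cases "\<sigma> (a,b)")
    ultimately have "p = a" "E p q" by (auto simp: darts_def)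
    then show "\<exists>c. \<sigma> (a,b) = (a,c) \<and> E a c" using pq by blast
  qed
  define f where "f = face_perm \<sigma>"
  have vu: "E v u" using Es uv by blast
  obtain x where x1: "\<sigma> (v,u) = (v,x)" and x2: "E v x" using step[OF vu] by blast
  have xv: "E x v" using Es x2 by blast
  obtain y where y1: "\<sigma> (x,v) = (x,y)" and y2: "E x y" using step[OF xv] by blast
  have yx: "E y x" using Es y2 by blast
  obtain z where z1: "\<sigma> (y,x) = (y,z)" and z2: "E y z" using step[OF yx] by blast
  have f1: "f (u,v) = (v,x)" using x1 by (simp add: f_def face_perm_def)
  have f2: "f (v,x) = (x,y)" using y1 by (simp add: f_def face_perm_def)
  have f3: "f (x,y) = (y,z)" using z1 by (simp add: f_def face_perm_def)
  have F: "card (orbit f (u,v)) = 3"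
    using fc uv unfolding faces_def f_def by (auto simp: darts_def)
  have i0: "(u,v) \<in> orbit f (u,v)" unfolding orbit_def by (auto intro: exI[of _ 0])
  have i1: "(v,x) \<in> orbit f (u,v)" unfolding orbit_def
    by (rule CollectI, rule exI[of _ "(Suc 0)"]) (simp add: f1)
  have i2: "(x,y) \<in> orbit f (u,v)" unfolding orbit_def
    by (rule CollectI, rule exI[of _ "Suc (Suc 0)"]) (simp add: f1 f2)
  have i3: "(y,z) \<in> orbit f (u,v)" unfolding orbit_def
    by (rule CollectI, rule exI[of _ "Suc (Suc (Suc 0))"]) (simp add: f1 f2 f3)
  have n02: "(u,v) \<noteq> (x,y)"
  proof
    assume h: "(u,v) = (x,y)"
    have f2': "f (v,x) = (u,v)" using f2 h by simp
    have "\<forall>n. (f ^^ n) (u,v) \<in> {(u,v),(v,x)}"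
    proof
      fix n show "(f ^^ n) (u,v) \<in> {(u,v),(v,x)}"
      proof (induction n)
        case 0 show ?case by simp
      next
        case (Suc n)
        then have "(f ^^ n) (u,v) = (u,v) \<or> (f ^^ n) (u,v) = (v,x)" by blast
        then show ?case using f1 f2' by (elim disjE) simp_all
      qed
    qed
    then have "orbit f (u,v) \<subseteq> {(u,v),(v,x)}" unfolding orbit_def by (smt (verit) mem_Collect_eq subsetI)
    then have "card (orbit f (u,v)) \<le> card {(u,v),(v,x)}" by (intro card_mono) auto
    also have "\<dots> \<le> 2" by (simp add: card_insert_if)
    finally have "card (orbit f (u,v)) \<le> 2" .
    then show False using F by simp
  qed
  have n01: "(u,v) \<noteq> (v,x)" using Es uv by auto
  have n12: "(v,x) \<noteq> (x,y)" using Es x2 by auto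
  have fin: "finite (orbit f (u,v))" using F card.infinite by fastforce
  have sub: "{(u,v),(v,x),(x,y)} \<subseteq> orbit f (u,v)" using i0 i1 i2 by auto
  have c3: "card {(u,v),(v,x),(x,y)} = 3" using n01 n02 n12 by auto
  have eq: "{(u,v),(v,x),(x,y)} = orbit f (u,v)"
    using card_subset_eq[OF fin sub] c3 F by simp
  have n32: "(y,z) \<noteq> (x,y)" using Es y2 by auto
  have n31: "(y,z) \<noteq> (v,x)"
  proof
    assume h: "(y,z) = (v,x)"
    have "\<sigma> (y,x) = \<sigma> (v,u)" using h z1 x1 by simp
    moreover have "(y,x) \<in> darts E" "(v,u) \<in> darts E" using yx vu by (auto simp: darts_def)
    ultimately have "(y,x) = (v,u)" using bij unfolding bij_betw_def inj_on_def by blast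
    then show False using n02 by auto
  qed
  have "(y,z) \<in> {(u,v),(v,x),(x,y)}" using i3 unfolding eq[symmetric] .
  then have "(y,z) = (u,v)" using n32 n31 by blast
  then have yu: "y = u" and zv: "z = v" by auto
  have "E x u" using y2 yu by simp
  moreover have "\<sigma> (x,v) = (x,u)" using y1 yu by simp
  moreover have "\<sigma> (u,x) = (u,v)" using z1 yu zv by simp
  ultimately show ?thesis using x1 x2 by blast
qed

lemma rot2:
  assumes rs: "rotation_system E \<sigma>" and h1: "\<sigma> (u,v) = (u,x)" and h2: "\<sigma> (u,x) = (u,v)"
    and uv: "E u v"
  shows "nbrs E u \<subseteq> {v,x}"
proof
  fix w assume "w \<in> nbrs E u"
  then have "E u w" by (simp add: nbrs_def)
  then obtain n where n: "(\<sigma> ^^ n) (u,v) = (u,w)" using rs uv unfolding rotation_system_def by blast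
  have "\<forall>n. (\<sigma> ^^ n) (u,v) \<in> {(u,v),(u,x)}"
  proof
    fix n show "(\<sigma> ^^ n) (u,v) \<in> {(u,v),(u,x)}"
      proof (induction n)
        case 0 show ?case by simp
      next
        case (Suc n)
        then have "(\<sigma> ^^ n) (u,v) = (u,v) \<or> (\<sigma> ^^ n) (u,v) = (u,x)" by blast
        then show ?case using h1 h2 by (elim disjE) simp_all
      qed
  qed
  then show "w \<in> {v,x}" using n by (metis insert_iff prod.inject singletonD)
qed

lemma pig5:
  fixes a b c d e :: nat
  assumes "a \<in> {1..4}" "b \<in> {1..4}" "c \<in> {1..4}" "d \<in> {1..4}" "e \<in> {1..4}"
    and "a \<noteq> b" "a \<noteq> c" "a \<noteq> d" "a \<noteq> e" "b \<noteq> c" "b \<noteq> d" "b \<noteq> e"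
    "c \<noteq> d" "c \<noteq> e" "d \<noteq> e"
  shows False
proof -
  have "card {a,b,c,d,e} = 5" using assms by simp
  moreover have "card {a,b,c,d,e} \<le> card {1..4::nat}"
    using assms by (intro card_mono) auto
  ultimately show False by simp
qed

theorem lemma3:
  fixes V :: "'a set" and E :: "'a \<Rightarrow> 'a \<Rightarrow> bool" and \<psi> :: "'a \<Rightarrow> nat option"
  assumes tri: "triangulation V E"
    and counterex: "\<not> (\<exists>S. independent_dominating V E S \<and> 3 * card S \<le> card V)"
    and minimal: "\<forall>(V' :: nat set) E'. triangulation V' E' \<and> card V' < card V \<longrightarrow>
                    (\<exists>S. independent_dominating V' E' S \<and> 3 * card S \<le> card V')"
    and col: "partial_proper_4col V E \<psi>"
    and unc_deg: "\<forall>v\<in>V. \<psi> v = None \<longrightarrow> degree E v = 4"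
    and three: "\<forall>v\<in>V. card (cols_closed E \<psi> v) \<ge> 3"
    and four: "\<forall>v\<in>V. degree E v \<le> 5 \<longrightarrow> card (cols_closed E \<psi> v) = 4"
  shows "\<exists>S. S \<subseteq> bad_vertices V E \<psi> \<and> (\<forall>e\<in>bad_edges V E \<psi>. e \<inter> S \<noteq> {}) \<and>
             card S \<le> card (uncoloured V \<psi>)"
proof -
  have sg: "simple_graph V E" using tri unfolding triangulation_def by blast
  obtain \<sigma> where rs: "rotation_system E \<sigma>" and fc: "\<forall>F\<in>faces E \<sigma>. card F = 3"
    using tri unfolding triangulation_def by blast
  have finV: "finite V" using sg unfolding simple_graph_def by blast
  have Es: "\<And>a b. E a b \<Longrightarrow> E b a \<and> a \<noteq> b \<and> a \<in> V \<and> b \<in> V"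
    using sg unfolding simple_graph_def by blast
  have colr: "\<And>v c. v \<in> V \<Longrightarrow> \<psi> v = Some c \<Longrightarrow> c \<in> {1..4}"
    using col unfolding partial_proper_4col_def by blast
  have prp: "\<And>a b c. E a b \<Longrightarrow> \<psi> a = Some c \<Longrightarrow> \<psi> b \<noteq> Some c"
    using col unfolding partial_proper_4col_def by blast
  have ccsub: "\<And>v. v \<in> V \<Longrightarrow> cols_closed E \<psi> v \<subseteq> {1..4}"
  proof
    fix v c assume v: "v \<in> V" and "c \<in> cols_closed E \<psi> v"
    then obtain w where "w \<in> insert v (nbrs E v)" "\<psi> w = Some c" unfolding cols_closed_def by blast
    moreover have "w \<in> V" using v calculation Es unfolding nbrs_def by auto
    ultimately show "c \<in> {1..4}" using colr by blast
  qed
  define U where "U = U_set V E \<psi>"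
  have Uchar: "\<And>u i. u \<in> U i \<longleftrightarrow> u \<in> V \<and> \<psi> u \<noteq> Some i \<and> (\<forall>w. E u w \<longrightarrow> \<psi> w \<noteq> Some i)"
    unfolding U_def U_set_def colour_class_def using Es by auto
  have Ucc: "\<And>u i. u \<in> U i \<Longrightarrow> i \<notin> cols_closed E \<psi> u"
    unfolding Uchar cols_closed_def nbrs_def by auto
  have Udeg: "\<And>u i. u \<in> U i \<Longrightarrow> i \<in> {1..4} \<Longrightarrow> degree E u > 5"
  proof (rule ccontr)
    fix u i assume u: "u \<in> U i" and i: "i \<in> {1..4}" and "\<not> degree E u > 5"
    then have uV: "u \<in> V" and "card (cols_closed E \<psi> u) = 4" using four Uchar by auto
    moreover have "card {1..4::nat} = 4" by simp
    ultimately have "cols_closed E \<psi> u = {1..4}"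
      using card_subset_eq[OF finite_atLeastAtMost ccsub[OF uV]] by simp
    then show False using Ucc[OF u] i by blast
  qed
  have Ucol: "\<And>u i. u \<in> U i \<Longrightarrow> i \<in> {1..4} \<Longrightarrow> \<exists>c. \<psi> u = Some c"
  proof -
    fix u i assume u: "u \<in> U i" and i: "i \<in> {1..4}"
    have "degree E u > 5" using Udeg[OF u i] .
    moreover have "u \<in> V" using u Uchar by blast
    ultimately have "\<psi> u \<noteq> None" using unc_deg by force
    then show "\<exists>c. \<psi> u = Some c" by blast
  qed
  define B where "B = bad_vertices V E \<psi>"
  define W where "W = uncoloured V \<psi>"
  define bad where "bad u v i j \<longleftrightarrow> E u v \<and> i \<in> {1..4} \<and> j \<in> {1..4} \<and> i \<noteq> j \<and> u \<in> U i \<and> v \<in> U j"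
    for u v i j
  have bad_sym: "\<And>u v i j. bad u v i j \<Longrightarrow> bad v u j i" unfolding bad_def using Es by blast
  have BE: "bad_edges V E \<psi> = {{u, v} | u v i j. bad u v i j}"
    unfolding bad_edges_def bad_def U_def by simp
  have Bchar: "\<And>u. u \<in> B \<Longrightarrow> \<exists>v i j. bad u v i j"
  proof -
    fix u assume "u \<in> B"
    then obtain e where "e \<in> bad_edges V E \<psi>" "u \<in> e" unfolding B_def bad_vertices_def by blast
    then obtain a b i j where "e = {a,b}" "bad a b i j" unfolding BE by blast
    then show "\<exists>v i j. bad u v i j" using bad_sym \<open>u \<in> e\<close> by blast
  qed
  have Bin: "\<And>u v i j. bad u v i j \<Longrightarrow> u \<in> B"
    unfolding B_def bad_vertices_def BE by blast
  have BV: "B \<subseteq> V" using Bchar Es unfolding bad_def by blast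
  have key: "\<And>u v i j. bad u v i j \<Longrightarrow> \<exists>cu cv. \<psi> u = Some cu \<and> \<psi> v = Some cv \<and>
      cu \<in> {1..4} \<and> cv \<in> {1..4} \<and> cu \<noteq> cv \<and> cu \<noteq> i \<and> cu \<noteq> j \<and> cv \<noteq> i \<and> cv \<noteq> j"
  proof -
    fix u v i j assume b: "bad u v i j"
    then obtain cu cv where cu: "\<psi> u = Some cu" and cv: "\<psi> v = Some cv"
      using Ucol unfolding bad_def by blast
    have uv: "E u v" and vu: "E v u" and uV: "u \<in> V" and vV: "v \<in> V"
      using b Es unfolding bad_def by auto
    have ui: "u \<in> U i" and vj: "v \<in> U j" using b unfolding bad_def by auto
    have "cu \<in> {1..4}" "cv \<in> {1..4}" using colr uV vV cu cv by auto
    moreover have "cu \<noteq> cv" using prp[OF uv cu] cv by auto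
    moreover have "cu \<noteq> i" using ui cu Uchar by auto
    moreover have "cv \<noteq> j" using vj cv Uchar by auto
    moreover have "cu \<noteq> j" using vj vu cu Uchar by auto
    moreover have "cv \<noteq> i" using ui uv cv Uchar by auto
    ultimately show "?thesis u v i j" using cu cv by blast
  qed
  have common: "\<And>u v i j w. bad u v i j \<Longrightarrow> E u w \<Longrightarrow> E v w \<Longrightarrow> w \<in> W"
  proof -
    fix u v i j w assume b: "bad u v i j" and uw: "E u w" and vw: "E v w"
    obtain cu cv where k: "\<psi> u = Some cu \<and> \<psi> v = Some cv \<and>
      cu \<in> {1..4} \<and> cv \<in> {1..4} \<and> cu \<noteq> cv \<and> cu \<noteq> i \<and> cu \<noteq> j \<and> cv \<noteq> i \<and> cv \<noteq> j"
      using key[OF b] by blast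
    have wV: "w \<in> V" using Es uw by blast
    show "w \<in> W"
    proof (cases "\<psi> w")
      case None then show ?thesis using wV unfolding W_def uncoloured_def by simp
    next
      case (Some m)
      have m: "m \<in> {1..4}" using colr wV Some by blast
      have "m \<noteq> i" "m \<noteq> j" using b uw vw Some Uchar unfolding bad_def by auto
      moreover have "m \<noteq> cu" using k prp[OF uw] Some by auto
      moreover have "m \<noteq> cv" using k prp[OF vw] Some by auto
      moreover have "i \<in> {1..4}" "j \<in> {1..4}" "i \<noteq> j" using b unfolding bad_def by auto
      ultimately have False using m k pig5[of m i j cu cv] by auto
      then show ?thesis ..
    qed
  qed
  have finB: "finite B" and finW: "finite W"
    using BV finV finite_subset unfolding W_def uncoloured_def by auto
  have two: "\<And>u. u \<in> B \<Longrightarrow> 2 \<le> card {w\<in>W. E u w}"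
  proof -
    fix u assume "u \<in> B"
    then obtain v i j where b: "bad u v i j" using Bchar by blast
    have uv: "E u v" and vu: "E v u" using b Es unfolding bad_def by auto
    obtain x where x: "E v x" "E x u" "\<sigma> (u,x) = (u,v)"
      using face_tri[OF sg rs fc uv] by blast
    obtain y where y: "E u y" "E y v" "\<sigma> (u,v) = (u,y)"
      using face_tri[OF sg rs fc vu] by blast
    have "x \<noteq> y"
    proof
      assume "x = y"
      then have "nbrs E u \<subseteq> {v,x}" using rot2[OF rs _ _ uv] x y by simp
      then have "card (nbrs E u) \<le> card {v,x}" by (intro card_mono) auto
      also have "\<dots> \<le> 2" by (simp add: card_insert_if)
      finally have "degree E u \<le> 2" unfolding degree_def .
      then show False using Udeg b unfolding bad_def by fastforce
    qed
    moreover have "x \<in> W" "y \<in> W" using common[OF b] x y Es by blast+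
    moreover have "E u x" "E u y" using x y Es by blast+
    ultimately have "{x,y} \<subseteq> {w\<in>W. E u w}" by auto
    moreover have "finite {w\<in>W. E u w}" using finW by simp
    ultimately have "card {x,y} \<le> card {w\<in>W. E u w}" by (intro card_mono)
    moreover have "card {x,y} = 2" using \<open>x \<noteq> y\<close> by simp
    ultimately show "2 \<le> card {w\<in>W. E u w}" by simp
  qed
  have le4: "\<And>w. w \<in> W \<Longrightarrow> card {u\<in>B. E u w} \<le> 4"
  proof -
    fix w assume w: "w \<in> W"
    then have "degree E w = 4" using unc_deg unfolding W_def uncoloured_def by auto
    moreover have "{u\<in>B. E u w} \<subseteq> nbrs E w" unfolding nbrs_def using Es by auto
    moreover have "nbrs E w \<subseteq> V" using Es unfolding nbrs_def by blast
    then have "finite (nbrs E w)" using finV finite_subset by blast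
    ultimately show "card {u\<in>B. E u w} \<le> 4" unfolding degree_def using card_mono by metis
  qed
  have BW: "2 * card B \<le> 4 * card W"
  proof -
    have "2 * card B = (\<Sum>u\<in>B. 2)" by simp
    also have "\<dots> \<le> (\<Sum>u\<in>B. card {w\<in>W. E u w})" using two by (intro sum_mono) auto
    also have "\<dots> = (\<Sum>w\<in>W. card {u\<in>B. E u w})" using dc[OF finB finW] .
    also have "\<dots> \<le> (\<Sum>w\<in>W. 4)" using le4 by (intro sum_mono) auto
    also have "\<dots> = 4 * card W" by simp
    finally show ?thesis .
  qed
  define S where "S k = {u\<in>B. \<psi> u = Some k \<or> u \<in> U k}" for k
  have atmost2: "\<And>u. u \<in> B \<Longrightarrow> card {k\<in>{1..4::nat}. \<psi> u = Some k \<or> u \<in> U k} \<le> 2"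
  proof -
    fix u assume u: "u \<in> B"
    then obtain v i j where b: "bad u v i j" using Bchar by blast
    then obtain cu where cu: "\<psi> u = Some cu" using key by blast
    have uV: "u \<in> V" using u BV by blast
    have "{k\<in>{1..4::nat}. \<psi> u = Some k \<or> u \<in> U k} \<subseteq> insert cu ({1..4} - cols_closed E \<psi> u)"
      using cu Ucc by auto
    moreover have "card ({1..4::nat} - cols_closed E \<psi> u) \<le> 1"
    proof -
      have "card ({1..4::nat} - cols_closed E \<psi> u) = 4 - card (cols_closed E \<psi> u)"
        using ccsub[OF uV] by (simp add: card_Diff_subset finite_subset)
      then show ?thesis using three uV by auto
    qed
    moreover have "card (insert cu ({1..4::nat} - cols_closed E \<psi> u)) \<le> card ({1..4::nat} - cols_closed E \<psi> u) + 1"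
      by (simp add: card_insert_if)
    moreover have "card {k\<in>{1..4::nat}. \<psi> u = Some k \<or> u \<in> U k} \<le> card (insert cu ({1..4::nat} - cols_closed E \<psi> u))"
      using calculation(1) by (intro card_mono) auto
    ultimately show "card {k\<in>{1..4::nat}. \<psi> u = Some k \<or> u \<in> U k} \<le> 2" by linarith
  qed
  have sumS: "(\<Sum>k\<in>{1..4::nat}. card (S k)) \<le> 2 * card B"
  proof -
    have "(\<Sum>k\<in>{1..4::nat}. card (S k)) = (\<Sum>k\<in>{1..4::nat}. card {u\<in>B. \<psi> u = Some k \<or> u \<in> U k})"
      unfolding S_def by simp
    also have "\<dots> = (\<Sum>u\<in>B. card {k\<in>{1..4::nat}. \<psi> u = Some k \<or> u \<in> U k})"
      by (rule dc[OF finite_atLeastAtMost finB])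
    also have "\<dots> \<le> (\<Sum>u\<in>B. 2)" using atmost2 by (intro sum_mono) auto
    finally show ?thesis by simp
  qed
  obtain k where k: "k \<in> {1..4::nat}" "card (S k) \<le> card W"
  proof (rule ccontr)
    assume "\<not> thesis"
    then have "\<forall>k\<in>{1..4::nat}. card W < card (S k)" using that by force
    then have "(\<Sum>k\<in>{1..4::nat}. card W) < (\<Sum>k\<in>{1..4::nat}. card (S k))"
      by (intro sum_strict_mono) auto
    then show False using sumS BW by simp
  qed
  show ?thesis
  proof (intro exI conjI)
    show "S k \<subseteq> bad_vertices V E \<psi>" unfolding S_def B_def by auto
    show "card (S k) \<le> card (uncoloured V \<psi>)" using k W_def by simp
    show "\<forall>e\<in>bad_edges V E \<psi>. e \<inter> S k \<noteq> {}"
    proof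
      fix e assume "e \<in> bad_edges V E \<psi>"
      then obtain u v i j where e: "e = {u,v}" and b: "bad u v i j" unfolding BE by blast
      obtain cu cv where kk: "\<psi> u = Some cu \<and> \<psi> v = Some cv \<and>
        cu \<in> {1..4} \<and> cv \<in> {1..4} \<and> cu \<noteq> cv \<and> cu \<noteq> i \<and> cu \<noteq> j \<and> cv \<noteq> i \<and> cv \<noteq> j"
        using key[OF b] by blast
      have uB: "u \<in> B" and vB: "v \<in> B" using Bin b bad_sym by blast+
      have "i \<in> {1..4}" "j \<in> {1..4}" "i \<noteq> j" using b unfolding bad_def by auto
      then have "k = cu \<or> k = i \<or> k = cv \<or> k = j" using k(1) kk pig5[of k i j cu cv] by auto
      then have "u \<in> S k \<or> v \<in> S k" using kk b uB vB unfolding S_def bad_def by auto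
      then show "e \<inter> S k \<noteq> {}" using e by auto
    qed
  qed
qed

end
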